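(* Let $N\ge2$ and let $(A_1,\dots,A_N)$ be nonnegative random variables satisfying $P\{\sum_{i}\mathbf{1}\{A_i>0\}\in\{0,1\}\}<1$, $\mathbb{E}[\sum_i\mathbf{1}\{A_i>0\}]>1$, $P\{A_i\in\{0,1\}\ \forall i\}<1$. Let $\phi(t,\xi)$ be the solution of the Cauchy problem described in the context with initial characteristic function $\phi_0$ of a distribution function $F_0$. Assume $F_0$ satisfies $(\mathbf{H}_\gamma)$ (see context) for some $\gamma\in(0,2]$. If $\mu(\delta)<\mu(\gamma)<+\infty$ for some $0<\delta<\gamma$, then $\lim_{t\to+\infty}\phi(t,e^{-t\mu(\gamma)}\xi)=1$ for every $\xi\in\mathbb{R}$.
   Context: $\mathcal{Q}(s)=\mathbb{E}[\sum_{j=1}^N A_j^s]-1$ for $s\ge0$ (convention $0^0=0$), $\mu(s)=\mathcal{Q}(s)/s$. Cauchy problem: for each $t\ge0$, $\phi(t,\cdot)$ is a characteristic function, $\partial_t\phi(t,\xi)+\phi(t,\xi)=\mathbb{E}[\prod_{i=1}^N\phi(t,A_i\xi)]$ for $t>0,\xi\in\mathbb{R}$, $\phi(0,\cdot)=\phi_0$ (unique solution). Hypothesis $(\mathbf{H}_\gamma)$: if $\gamma=1$: either (a) $\int|v|dF_0(v)<\infty$, or (b) $F_0$ symmetric with $\lim_{x\to+\infty}x(1-F_0(x))=c_0^+=\lim_{x\to-\infty}|x|F_0(x)$, $0<c_0^+<\infty$. If $\gamma=2$: $0<\int v^2dF_0(v)<\infty$ and $\int v\,dF_0(v)=0$.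 If $\gamma\in(0,1)\cup(1,2)$: $\lim_{x\to+\infty}x^\gamma(1-F_0(x))=c_0^+<\infty$, $\lim_{x\to-\infty}|x|^\gamma F_0(x)=c_0^-<\infty$, $c_0^++c_0^->0$, and $\int v\,dF_0(v)=0$ if $\gamma>1$. *)

theory Defs
  imports "HOL-Probability.Probability"
begin

text \<open>E[sum_j A_j^s] - 1, with 0 powr s = 0 (convention 0^0 = 0); value in ereal (may be +infinity).\<close>
definition Qfun :: "'a measure \<Rightarrow> nat \<Rightarrow> (nat \<Rightarrow> 'a \<Rightarrow> real) \<Rightarrow> real \<Rightarrow> ereal" where
  "Qfun M N A s = enn2ereal (\<integral>\<^sup>+ \<omega>. (\<Sum>j<N. ennreal (A j \<omega> powr s)) \<partial>M) - 1"

definition mufun :: "'a measure \<Rightarrow> nat \<Rightarrow> (nat \<Rightarrow> 'a \<Rightarrow> real) \<Rightarrow> real \<Rightarrow> ereal" where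
  "mufun M N A s = Qfun M N A s / ereal s"

definition H_gamma :: "real measure \<Rightarrow> real \<Rightarrow> bool" where
  "H_gamma M0 \<gamma> \<longleftrightarrow>
     (\<gamma> = 1 \<longrightarrow>
        (integrable M0 (\<lambda>v. \<bar>v\<bar>)
         \<or> (distr M0 borel uminus = M0 \<and>
            (\<exists>c. 0 < c \<and> ((\<lambda>x. x * (1 - cdf M0 x)) \<longlongrightarrow> c) at_top
                 \<and> ((\<lambda>x. \<bar>x\<bar> * cdf M0 x) \<longlongrightarrow> c) at_bot)))) \<and>
     (\<gamma> = 2 \<longrightarrow>
        integrable M0 (\<lambda>v. v ^ 2) \<and> 0 < (\<integral>v. v ^ 2 \<partial>M0)
        \<and> integrable M0 (\<lambda>v. v) \<and> (\<integral>v. v \<partial>M0) = 0) \<and>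
     ((\<gamma> \<in> {0<..<1} \<union> {1<..<2}) \<longrightarrow>
        (\<exists>cp cm. ((\<lambda>x. x powr \<gamma> * (1 - cdf M0 x)) \<longlongrightarrow> cp) at_top
                \<and> ((\<lambda>x. \<bar>x\<bar> powr \<gamma> * cdf M0 x) \<longlongrightarrow> cm) at_bot
                \<and> 0 < cp + cm
                \<and> (\<gamma> > 1 \<longrightarrow> integrable M0 (\<lambda>v. v) \<and> (\<integral>v. v \<partial>M0) = 0)))"

definition cauchy_solution ::
  "'a measure \<Rightarrow> nat \<Rightarrow> (nat \<Rightarrow> 'a \<Rightarrow> real) \<Rightarrow> (real \<Rightarrow> complex) \<Rightarrow> (real \<Rightarrow> real \<Rightarrow> complex) \<Rightarrow> bool" where
  "cauchy_solution M N A phi0 phi \<longleftrightarrow>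
     (\<forall>t\<ge>0. \<exists>F. real_distribution F \<and> phi t = char F) \<and>
     (\<forall>\<xi>. continuous_on {0..} (\<lambda>t. phi t \<xi>)) \<and>
     (\<forall>t>0. \<forall>\<xi>. ((\<lambda>s. phi s \<xi>) has_vector_derivative
          (- phi t \<xi> + (\<integral>\<omega>. (\<Prod>i<N. phi t (A i \<omega> * \<xi>)) \<partial>M))) (at t)) \<and>
     phi 0 = phi0"

end

theory Submission
  imports Defs
begin


lemma prod_diff_bound:
  fixes a :: "nat \<Rightarrow> complex"
  assumes "finite S" "\<forall>i\<in>S. cmod (a i) \<le> 1"
  shows "cmod (1 - (\<Prod>i\<in>S. a i)) \<le> (\<Sum>i\<in>S. cmod (1 - a i))"
  using assms
proof (induction S rule: finite_induct)
  case empty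
  then show ?case by simp
next
  case (insert x F)
  have ax: "cmod (a x) \<le> 1" using insert by simp
  have ih: "cmod (1 - (\<Prod>i\<in>F. a i)) \<le> (\<Sum>i\<in>F. cmod (1 - a i))" using insert by simp
  have "1 - (\<Prod>i\<in>insert x F. a i) = (1 - a x) + a x * (1 - (\<Prod>i\<in>F. a i))"
    using insert by (simp add: algebra_simps)
  also have "cmod \<dots> \<le> cmod (1 - a x) + cmod (a x) * cmod (1 - (\<Prod>i\<in>F. a i))"
    by (metis norm_mult norm_triangle_ineq)
  also have "\<dots> \<le> cmod (1 - a x) + 1 * cmod (1 - (\<Prod>i\<in>F. a i))"
    by (intro add_left_mono mult_right_mono ax) simp
  also have "\<dots> \<le> cmod (1 - a x) + (\<Sum>i\<in>F. cmod (1 - a i))" using ih by simp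
  finally show ?case using insert by simp
qed

lemma compare_deriv:
  fixes z :: "real \<Rightarrow> complex"
  assumes t: "0 < t" and zc: "continuous_on {0..t} z" and Bc: "continuous_on {0..t} B"
   and zd: "\<And>s. 0<s \<Longrightarrow> s<t \<Longrightarrow> (z has_vector_derivative z' s) (at s)"
   and Bd: "\<And>s. 0<s \<Longrightarrow> s<t \<Longrightarrow> (B has_real_derivative B' s) (at s)"
   and le: "\<And>s. 0<s \<Longrightarrow> s<t \<Longrightarrow> cmod (z' s) \<le> B' s"
  shows "cmod (z t - z 0) \<le> B t - B 0"
proof -
  define w where "w = z t - z 0"
  define f where "f s = Re w * Re (z s) + Im w * Im (z s) - cmod w * B s" for s
  have fd: "(f has_real_derivative (Re w * Re (z' s) + Im w * Im (z' s) - cmod w * B' s)) (at s)"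
    if "0<s" "s<t" for s
  proof -
    have "((\<lambda>x. Re (z x)) has_real_derivative Re (z' s)) (at s)"
         "((\<lambda>x. Im (z x)) has_real_derivative Im (z' s)) (at s)"
      using zd[OF that] by (auto simp: has_vector_derivative_complex_iff)
    then show ?thesis unfolding f_def
      by (intro DERIV_diff DERIV_add DERIV_cmult Bd that)
  qed
  have fc: "continuous_on {0..t} f" unfolding f_def
    by (intro continuous_intros continuous_on_compose2[OF continuous_on_Re zc]
        continuous_on_compose2[OF continuous_on_Im zc] Bc) auto
  obtain l s where s: "0 < s" "s < t" and dl: "(f has_real_derivative l) (at s)"
    and eq: "f t - f 0 = (t - 0) * l"
    using MVT[OF t fc] fd by (metis real_differentiable_def)
  have l: "l = Re w * Re (z' s) + Im w * Im (z' s) - cmod w * B' s"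
    using DERIV_unique[OF dl fd[OF s]] .
  have "Re w * Re (z' s) + Im w * Im (z' s) = Re (cnj w * z' s)" by simp
  also have "\<dots> \<le> cmod (cnj w * z' s)" by (rule complex_Re_le_cmod)
  also have "\<dots> = cmod w * cmod (z' s)" by (simp add: norm_mult)
  also have "\<dots> \<le> cmod w * B' s" by (intro mult_left_mono le s) simp
  finally have "l \<le> 0" using l by simp
  hence "f t - f 0 \<le> 0" using eq t by (simp add: mult_nonneg_nonpos)
  moreover have "f t - f 0 = (Re w ^ 2 + Im w ^ 2) - cmod w * (B t - B 0)"
    unfolding f_def w_def by (simp add: algebra_simps power2_eq_square)
  ultimately have *: "cmod w ^ 2 \<le> cmod w * (B t - B 0)"
    by (simp add: cmod_power2)
  obtain l2 s2 where s2: "0 < s2" "s2 < t" and dl2: "(B has_real_derivative l2) (at s2)"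
    and eq2: "B t - B 0 = (t - 0) * l2"
    using MVT[OF t Bc] Bd by (metis real_differentiable_def)
  have "l2 = B' s2" using DERIV_unique[OF dl2 Bd[OF s2]] .
  moreover have "0 \<le> B' s2" using le[OF s2] norm_ge_zero order_trans by blast
  ultimately have B0: "0 \<le> B t - B 0" using eq2 t by simp
  show ?thesis
  proof (cases "cmod w = 0")
    case True then show ?thesis using B0 w_def by simp
  next
    case False
    then have "cmod w > 0" by simp
    with * show ?thesis unfolding w_def[symmetric]
      by (simp add: power2_eq_square)
  qed
qed



lemma iexp_bound1:
  assumes "0 < d" "d \<le> 1"
  shows "cmod (iexp y - 1) \<le> 2 * \<bar>y\<bar> powr d"
proof -
  have a1: "cmod (iexp y - 1) \<le> \<bar>y\<bar>" using iexp_approx1[of y 0] by simp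
  have a2: "cmod (iexp y - 1) \<le> 2" using iexp_approx2[of y 0] by simp
  show ?thesis
  proof (cases "\<bar>y\<bar> \<le> 1")
    case True
    have "\<bar>y\<bar> = \<bar>y\<bar> powr 1" by (cases "y = 0") auto
    also have "\<dots> \<le> \<bar>y\<bar> powr d"
      using True assms by (intro powr_mono') auto
    finally show ?thesis using a1 by (smt (verit) powr_ge_zero)
  next
    case False
    then have "1 \<le> \<bar>y\<bar> powr d" using assms by (intro ge_one_powr_ge_zero) auto
    then show ?thesis using a2 by simp
  qed
qed

lemma iexp_bound2:
  assumes "1 < d" "d \<le> 2"
  shows "cmod (iexp y - 1 - \<i> * y) \<le> 2 * \<bar>y\<bar> powr d"
proof -
  have a1: "cmod (iexp y - 1 - \<i> * y) \<le> \<bar>y\<bar>^2 / 2" using iexp_approx1[of y 1]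
    by (simp add: numeral_2_eq_2 diff_diff_eq)
  have a2: "cmod (iexp y - 1 - \<i> * y) \<le> 2 * \<bar>y\<bar>" using iexp_approx2[of y 1]
    by (simp add: diff_diff_eq)
  show ?thesis
  proof (cases "\<bar>y\<bar> \<le> 1")
    case True
    have "\<bar>y\<bar>^2 = \<bar>y\<bar> powr 2" by (cases "y = 0") (auto simp: powr_numeral)
    also have "\<dots> \<le> \<bar>y\<bar> powr d"
      using True assms by (intro powr_mono') auto
    finally have "\<bar>y\<bar>^2 \<le> \<bar>y\<bar> powr d" .
    moreover have "0 \<le> \<bar>y\<bar> powr d" by simp
    ultimately show ?thesis using a1 by linarith
  next
    case False
    have "\<bar>y\<bar> = \<bar>y\<bar> powr 1" using False by auto
    also have "\<dots> \<le> \<bar>y\<bar> powr d" using False assms by (intro powr_mono) auto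
    finally show ?thesis using a2 by simp
  qed
qed



lemma char_bound_small:
  assumes M0: "real_distribution M0" and d: "0 < d" "d \<le> 1"
    and int: "integrable M0 (\<lambda>x. \<bar>x\<bar> powr d)"
  shows "cmod (1 - char M0 \<xi>) \<le> (2 * (\<integral>x. \<bar>x\<bar> powr d \<partial>M0)) * \<bar>\<xi>\<bar> powr d"
proof -
  interpret real_distribution M0 by (rule M0)
  have ie: "integrable M0 (\<lambda>x. iexp (\<xi> * x))" by (intro integrable_const_bound[of _ 1]) auto
  have "char M0 \<xi> - 1 = (CLINT x|M0. iexp (\<xi> * x) - 1)"
    unfolding char_def using ie by (simp del: space_eq_univ add: prob_space)
  then have "cmod (1 - char M0 \<xi>) = cmod (CLINT x|M0. iexp (\<xi> * x) - 1)"
    by (metis norm_minus_commute)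
  also have "\<dots> \<le> (\<integral>x. 2 * \<bar>\<xi>\<bar> powr d * \<bar>x\<bar> powr d \<partial>M0)"
  proof (rule Bochner_Integration.integral_norm_bound_integral)
    show "integrable M0 (\<lambda>x. iexp (\<xi> * x) - 1)" using ie by simp
    show "integrable M0 (\<lambda>x. 2 * \<bar>\<xi>\<bar> powr d * \<bar>x\<bar> powr d)" using int by simp
    fix x
    have "cmod (iexp (\<xi> * x) - 1) \<le> 2 * \<bar>\<xi> * x\<bar> powr d" by (rule iexp_bound1[OF d])
    also have "\<dots> = 2 * \<bar>\<xi>\<bar> powr d * \<bar>x\<bar> powr d" by (simp add: abs_mult powr_mult)
    finally show "cmod (iexp (\<xi> * x) - 1) \<le> 2 * \<bar>\<xi>\<bar> powr d * \<bar>x\<bar> powr d" .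
  qed
  also have "\<dots> = (2 * (\<integral>x. \<bar>x\<bar> powr d \<partial>M0)) * \<bar>\<xi>\<bar> powr d"
    by simp
  finally show ?thesis .
qed

lemma char_bound_large:
  assumes M0: "real_distribution M0" and d: "1 < d" "d \<le> 2"
    and int: "integrable M0 (\<lambda>x. \<bar>x\<bar> powr d)"
    and int1: "integrable M0 (\<lambda>x. x)" and mean: "(\<integral>x. x \<partial>M0) = 0"
  shows "cmod (1 - char M0 \<xi>) \<le> (2 * (\<integral>x. \<bar>x\<bar> powr d \<partial>M0)) * \<bar>\<xi>\<bar> powr d"
proof -
  interpret real_distribution M0 by (rule M0)
  have ie: "integrable M0 (\<lambda>x. iexp (\<xi> * x))" by (intro integrable_const_bound[of _ 1]) auto
  have i1: "integrable M0 (\<lambda>x. \<i> * complex_of_real (\<xi> * x))"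
    using int1 by (intro integrable_mult_right) (simp add: integrable_of_real)
  have "(CLINT x|M0. \<i> * complex_of_real (\<xi> * x)) = \<i> * (CLINT x|M0. complex_of_real (\<xi> * x))"
    by (rule integral_mult_right_zero)
  also have "(CLINT x|M0. complex_of_real (\<xi> * x)) = of_real (\<integral>x. \<xi> * x \<partial>M0)"
    by (rule integral_complex_of_real)
  also have "(\<integral>x. \<xi> * x \<partial>M0) = \<xi> * (\<integral>x. x \<partial>M0)"
    by (rule integral_mult_right_zero)
  also have "\<dots> = 0" using mean by simp
  finally have z: "(CLINT x|M0. \<i> * complex_of_real (\<xi> * x)) = 0" by simp
  have "char M0 \<xi> - 1 = (CLINT x|M0. iexp (\<xi> * x) - 1 - \<i> * complex_of_real (\<xi> * x))"
    unfolding char_def using ie i1 z by (simp del: space_eq_univ add: prob_space)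
  then have "cmod (1 - char M0 \<xi>) = cmod (CLINT x|M0. iexp (\<xi> * x) - 1 - \<i> * complex_of_real (\<xi> * x))"
    by (metis norm_minus_commute)
  also have "\<dots> \<le> (\<integral>x. 2 * \<bar>\<xi>\<bar> powr d * \<bar>x\<bar> powr d \<partial>M0)"
  proof (rule Bochner_Integration.integral_norm_bound_integral)
    show "integrable M0 (\<lambda>x. iexp (\<xi> * x) - 1 - \<i> * complex_of_real (\<xi> * x))" using ie i1 by simp
    show "integrable M0 (\<lambda>x. 2 * \<bar>\<xi>\<bar> powr d * \<bar>x\<bar> powr d)" using int by simp
    fix x
    have "cmod (iexp (\<xi> * x) - 1 - \<i> * complex_of_real (\<xi> * x)) \<le> 2 * \<bar>\<xi> * x\<bar> powr d"
      by (rule iexp_bound2[OF d])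
    also have "\<dots> = 2 * \<bar>\<xi>\<bar> powr d * \<bar>x\<bar> powr d" by (simp add: abs_mult powr_mult)
    finally show "cmod (iexp (\<xi> * x) - 1 - \<i> * complex_of_real (\<xi> * x)) \<le> 2 * \<bar>\<xi>\<bar> powr d * \<bar>x\<bar> powr d" .
  qed
  also have "\<dots> = (2 * (\<integral>x. \<bar>x\<bar> powr d \<partial>M0)) * \<bar>\<xi>\<bar> powr d"
    by simp
  finally show ?thesis .
qed



lemma ennreal_term_le_suminf: "(f k :: ennreal) \<le> suminf f"
  using sum_le_suminf[of f "{k}"] by (simp add: summableI)

lemma moment_tail:
  fixes M0 :: "real measure"
  assumes P: "prob_space M0" and S: "sets M0 = sets borel" and d: "0 < d" "d < g"
    and x0: "0 < x0" and tail: "\<And>x. x0 \<le> x \<Longrightarrow> measure M0 {y. x < \<bar>y\<bar>} \<le> K * x powr (-g)"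
  shows "integrable M0 (\<lambda>y. \<bar>y\<bar> powr d)"
proof -
  interpret prob_space M0 by (rule P)
  have sp: "space M0 = UNIV" using sets_eq_imp_space_eq[OF S] by simp
  define c where "c k = (x0 * 2 powr (real k + 1)) powr d" for k :: nat
  define E where "E k = {y::real. x0 * 2 powr real k < \<bar>y\<bar>}" for k :: nat
  have Eb: "E k \<in> sets borel" for k
  proof -
    have "{y\<in>space borel. x0 * 2 powr real k < \<bar>y\<bar>} \<in> sets borel" by measurable
    then show ?thesis by (simp add: E_def)
  qed
  then have Es: "E k \<in> sets M0" for k using S by simp
  have pw: "ennreal (\<bar>y\<bar> powr d) \<le> ennreal (x0 powr d) + (\<Sum>k. ennreal (c k) * indicator (E k) y)" for y
  proof (cases "\<bar>y\<bar> \<le> x0")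
    case True
    then have "\<bar>y\<bar> powr d \<le> x0 powr d" using d by (intro powr_mono2) auto
    then have "ennreal (\<bar>y\<bar> powr d) \<le> ennreal (x0 powr d)" by simp
    then show ?thesis by (intro add_increasing2) auto
  next
    case False
    then have gt: "1 < \<bar>y\<bar> / x0" using x0 by simp
    obtain n where n: "\<bar>y\<bar> / x0 < 2 ^ n" using real_arch_pow[of 2 "\<bar>y\<bar> / x0"] by auto
    define m where "m = (LEAST n. \<bar>y\<bar> / x0 < 2 ^ n)"
    have m1: "\<bar>y\<bar> / x0 < 2 ^ m" unfolding m_def by (rule LeastI[of _ n]) (rule n)
    have m0: "m \<noteq> 0" using m1 gt by (intro notI) simp
    then obtain k where k: "m = Suc k" by (cases m) auto
    have "\<not> \<bar>y\<bar> / x0 < 2 ^ k" unfolding m_def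
      by (rule not_less_Least) (simp add: m_def[symmetric] k)
    then have lo: "x0 * 2 ^ k \<le> \<bar>y\<bar>" using x0 by (simp add: field_simps)
    have hi: "\<bar>y\<bar> < x0 * 2 ^ Suc k" using m1 k x0 by (simp add: field_simps)
    have p1: "(2::real) powr real k = 2 ^ k" by (rule powr_realpow) simp
    have p2: "(2::real) powr (real k + 1) = 2 ^ Suc k"
      using powr_realpow[of 2 "Suc k"] by (simp add: add.commute)
    have "\<bar>y\<bar> powr d \<le> c k" unfolding c_def p2 using hi d by (intro powr_mono2) auto
    moreover have "indicator (E k) y = (1::ennreal) \<or> \<bar>y\<bar> = x0 * 2^k"
      using lo unfolding E_def p1 by (auto simp: indicator_def)
    ultimately have "ennreal (\<bar>y\<bar> powr d) \<le> ennreal (c k) * indicator (E k) y \<or> \<bar>y\<bar> = x0 * 2^k"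
      by (auto intro: ennreal_leI)
    then show ?thesis
    proof
      assume "ennreal (\<bar>y\<bar> powr d) \<le> ennreal (c k) * indicator (E k) y"
      also have "\<dots> \<le> (\<Sum>k. ennreal (c k) * indicator (E k) y)"
        by (rule ennreal_term_le_suminf[where f="\<lambda>k. ennreal (c k) * indicator (E k) y"])
      finally show ?thesis by (intro add_increasing) auto
    next
      assume eq: "\<bar>y\<bar> = x0 * 2^k"
      show ?thesis
      proof (cases k)
        case 0 then show ?thesis using eq False by simp
      next
        case (Suc j)
        have "\<bar>y\<bar> powr d \<le> c j" unfolding c_def using eq Suc x0 d
          using powr_realpow[of 2 "Suc j"] by (intro powr_mono2) (auto simp: add.commute)
        moreover have "indicator (E j) y = (1::ennreal)"
          using eq Suc x0 unfolding E_def using powr_realpow[of 2 j] by (simp add: indicator_def)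
        ultimately have "ennreal (\<bar>y\<bar> powr d) \<le> ennreal (c j) * indicator (E j) y" by (simp add: ennreal_leI)
        also have "\<dots> \<le> (\<Sum>k. ennreal (c k) * indicator (E k) y)"
          by (rule ennreal_term_le_suminf[where f="\<lambda>k. ennreal (c k) * indicator (E k) y"])
        finally show ?thesis by (intro add_increasing) auto
      qed
    qed
  qed
  define r where "r = (2::real) powr (d - g)"
  define D where "D = max K 0 * x0 powr d * x0 powr (-g) * 2 powr d"
  have r: "0 \<le> r" "r < 1" unfolding r_def using d by (auto intro!: powr_less_one)
  have D: "0 \<le> D" unfolding D_def by simp
  have tm: "ennreal (c k) * emeasure M0 (E k) \<le> ennreal (D * r ^ k)" for k
  proof -
    have "emeasure M0 (E k) = ennreal (measure M0 (E k))" by (simp add: emeasure_eq_measure)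
    moreover have "measure M0 (E k) \<le> max K 0 * (x0 * 2 powr real k) powr (-g)"
    proof -
      have "measure M0 (E k) \<le> K * (x0 * 2 powr real k) powr (-g)" unfolding E_def
        using x0 by (intro tail) (simp add: ge_one_powr_ge_zero)
      also have "\<dots> \<le> max K 0 * (x0 * 2 powr real k) powr (-g)"
        by (intro mult_right_mono) auto
      finally show ?thesis .
    qed
    ultimately have "ennreal (c k) * emeasure M0 (E k) \<le> ennreal (c k * (max K 0 * (x0 * 2 powr real k) powr (-g)))"
      unfolding c_def by (simp add: ennreal_mult'[symmetric] mult_left_mono)
    also have "c k * (max K 0 * (x0 * 2 powr real k) powr (-g)) = D * r ^ k"
    proof -
      have "r ^ k = 2 powr ((d - g) * real k)"
        unfolding r_def using powr_realpow[of "2 powr (d-g)" k] by (simp add: powr_powr)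
      moreover have "c k = x0 powr d * 2 powr ((real k + 1) * d)"
        unfolding c_def using x0 by (simp add: powr_mult powr_powr)
      moreover have "(x0 * 2 powr real k) powr (-g) = x0 powr (-g) * 2 powr (real k * (-g))"
        using x0 by (simp add: powr_mult powr_powr)
      moreover have "2 powr ((real k + 1) * d) * 2 powr (real k * (-g)) = (2::real) powr d * 2 powr ((d - g) * real k)"
        by (simp add: powr_add[symmetric] algebra_simps)
      ultimately show ?thesis unfolding D_def
        by (simp add: algebra_simps)
    qed
    finally show ?thesis .
  qed
  have meas: "(\<lambda>y. ennreal (c k) * indicator (E k) y) \<in> borel_measurable M0" for k
    using Es by simp
  have "(\<integral>\<^sup>+y. ennreal (\<bar>y\<bar> powr d) \<partial>M0) \<le> (\<integral>\<^sup>+y. ennreal (x0 powr d) + (\<Sum>k. ennreal (c k) * indicator (E k) y) \<partial>M0)"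
    by (intro nn_integral_mono pw)
  also have "\<dots> = (\<integral>\<^sup>+y. ennreal (x0 powr d) \<partial>M0) + (\<integral>\<^sup>+y. (\<Sum>k. ennreal (c k) * indicator (E k) y) \<partial>M0)"
    using meas by (intro nn_integral_add) (auto intro!: borel_measurable_suminf)
  also have "(\<integral>\<^sup>+y. (\<Sum>k. ennreal (c k) * indicator (E k) y) \<partial>M0) = (\<Sum>k. ennreal (c k) * emeasure M0 (E k))"
    using meas Es by (simp add: nn_integral_suminf nn_integral_cmult_indicator)
  also have "\<dots> \<le> (\<Sum>k. ennreal (D * r ^ k))" by (intro suminf_le tm) (auto intro: summableI)
  also have "\<dots> = ennreal (\<Sum>k. D * r ^ k)"
    using r D by (intro suminf_ennreal2) (auto intro!: summable_mult summable_geometric)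
  finally have "(\<integral>\<^sup>+y. ennreal (\<bar>y\<bar> powr d) \<partial>M0) < \<infinity>"
    by (simp add: emeasure_space_1 sp[symmetric]) (meson ennreal_add_less_top ennreal_less_top le_less_trans)
  moreover have "(\<lambda>y. \<bar>y\<bar> powr d) \<in> borel_measurable M0"
  proof -
    have "(\<lambda>y::real. \<bar>y\<bar> powr d) \<in> borel_measurable borel" by measurable
    then show ?thesis by (subst measurable_cong_sets[OF S refl])
  qed
  ultimately show ?thesis by (intro integrableI_bounded) auto
qed



lemma tail_from_limits:
  assumes M0: "real_distribution M0" and g: "0 < g"
   and L1: "((\<lambda>x. x powr g * (1 - cdf M0 x)) \<longlongrightarrow> cp) at_top"
   and L2: "((\<lambda>x. \<bar>x\<bar> powr g * cdf M0 x) \<longlongrightarrow> cm) at_bot"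
  shows "\<exists>x0>0. \<exists>K. \<forall>x\<ge>x0. measure M0 {y. x < \<bar>y\<bar>} \<le> K * x powr (-g)"
proof -
  interpret real_distribution M0 by (rule M0)
  have "eventually (\<lambda>x. x powr g * (1 - cdf M0 x) < cp + 1) at_top"
    using L1 by (rule order_tendstoD) simp
  then obtain X1 where X1: "\<And>x. x \<ge> X1 \<Longrightarrow> x powr g * (1 - cdf M0 x) < cp + 1"
    by (auto simp: eventually_at_top_linorder)
  have "eventually (\<lambda>x. \<bar>x\<bar> powr g * cdf M0 x < cm + 1) at_bot"
    using L2 by (rule order_tendstoD) simp
  then obtain X2 where X2: "\<And>x. x \<le> X2 \<Longrightarrow> \<bar>x\<bar> powr g * cdf M0 x < cm + 1"
    by (auto simp: eventually_at_bot_linorder)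
  define x0 where "x0 = max 1 (max X1 (-X2))"
  have "\<forall>x\<ge>x0. measure M0 {y. x < \<bar>y\<bar>} \<le> (cp + cm + 2) * x powr (-g)"
  proof (intro allI impI)
    fix x assume x: "x0 \<le> x"
    then have xpos: "0 < x" and "X1 \<le> x" "-x \<le> X2" unfolding x0_def by auto
    then have a: "x powr g * (1 - cdf M0 x) < cp + 1" and b: "x powr g * cdf M0 (-x) < cm + 1"
      using X1 X2[of "-x"] by auto
    have pg: "0 < x powr g" using xpos by simp
    have pm: "x powr (-g) = 1 / x powr g" using xpos by (simp add: powr_minus_divide)
    have a': "1 - cdf M0 x \<le> (cp + 1) * x powr (-g)"
      using a pg unfolding pm by (simp add: field_simps)
    have b': "cdf M0 (-x) \<le> (cm + 1) * x powr (-g)"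
      using b pg unfolding pm by (simp add: field_simps)
    have "measure M0 {y. x < \<bar>y\<bar>} \<le> measure M0 ({x<..} \<union> {..-x})"
      by (intro finite_measure_mono) auto
    also have "\<dots> \<le> measure M0 {x<..} + measure M0 {..-x}"
      by (intro measure_Un_le) auto
    also have "measure M0 {x<..} = 1 - cdf M0 x"
    proof -
      have "prob (space M0 - {..x}) = 1 - prob {..x}" by (intro prob_compl) auto
      moreover have "space M0 - {..x} = {x<..}" by auto
      ultimately show ?thesis by (simp add: cdf_def)
    qed
    also have "measure M0 {..-x} = cdf M0 (-x)" by (simp add: cdf_def)
    finally show "measure M0 {y. x < \<bar>y\<bar>} \<le> (cp + cm + 2) * x powr (-g)"
      using a' b' by (simp add: algebra_simps)
  qed
  moreover have "0 < x0" unfolding x0_def by simp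
  ultimately show ?thesis by blast
qed



lemma moment_from_limits:
  assumes M0: "real_distribution M0" and d: "0 < d" "d < g"
   and L1: "((\<lambda>x. x powr g * (1 - cdf M0 x)) \<longlongrightarrow> cp) at_top"
   and L2: "((\<lambda>x. \<bar>x\<bar> powr g * cdf M0 x) \<longlongrightarrow> cm) at_bot"
  shows "integrable M0 (\<lambda>y. \<bar>y\<bar> powr d)"
proof -
  interpret real_distribution M0 by (rule M0)
  obtain x0 K where pos: "x0 > 0" and T: "\<forall>x\<ge>x0. measure M0 {y. x < \<bar>y\<bar>} \<le> K * x powr (-g)"
    using tail_from_limits[OF M0 _ L1 L2] d by auto
  show ?thesis
    by (rule moment_tail[OF prob_space_axioms events_eq_borel d pos]) (use T in auto)
qed

lemma moment_H:
  assumes M0: "real_distribution M0" and H: "H_gamma M0 g" and d: "0 < d" "d < g" and g2: "g \<le> 2"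
  shows "integrable M0 (\<lambda>y. \<bar>y\<bar> powr d)"
proof -
  interpret real_distribution M0 by (rule M0)
  have meas: "(\<lambda>y::real. \<bar>y\<bar> powr d) \<in> borel_measurable M0"
  proof -
    have "(\<lambda>y::real. \<bar>y\<bar> powr d) \<in> borel_measurable borel" by measurable
    then show ?thesis by (subst measurable_cong_sets[OF events_eq_borel refl])
  qed
  consider "g = 2" | "g = 1" | "g \<in> {0<..<1} \<union> {1<..<2}" using d g2 by fastforce
  then show ?thesis
  proof cases
    case 1
    then have i2: "integrable M0 (\<lambda>v. v ^ 2)" using H unfolding H_gamma_def by auto
    show ?thesis
    proof (rule Bochner_Integration.integrable_bound[OF _ meas])
      show "integrable M0 (\<lambda>v. 1 + v ^ 2)" using i2 by simp
      show "AE x in M0. norm (\<bar>x\<bar> powr d) \<le> norm (1 + x ^ 2)"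
      proof (intro AE_I2)
        fix x :: real
        have "\<bar>x\<bar> powr d \<le> 1 + x ^ 2"
        proof (cases "\<bar>x\<bar> \<le> 1")
          case True then have "\<bar>x\<bar> powr d \<le> 1" using d by (intro powr_le1) auto
          then show ?thesis by (smt (verit) zero_le_power2)
        next
          case False
          then have "\<bar>x\<bar> powr d \<le> \<bar>x\<bar> powr 2" using d 1 by (intro powr_mono) auto
          also have "\<dots> = x ^ 2" using False by (simp add: powr_numeral)
          finally show ?thesis by simp
        qed
        then show "norm (\<bar>x\<bar> powr d) \<le> norm (1 + x ^ 2)" by simp
      qed
    qed
  next
    case 2
    then have "integrable M0 (\<lambda>v. \<bar>v\<bar>) \<or> (\<exists>c. 0 < c \<and> ((\<lambda>x. x * (1 - cdf M0 x)) \<longlongrightarrow> c) at_top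
                 \<and> ((\<lambda>x. \<bar>x\<bar> * cdf M0 x) \<longlongrightarrow> c) at_bot)"
      using H unfolding H_gamma_def by auto
    then show ?thesis
    proof
      assume i1: "integrable M0 (\<lambda>v. \<bar>v\<bar>)"
      show ?thesis
      proof (rule Bochner_Integration.integrable_bound[OF _ meas])
        show "integrable M0 (\<lambda>v. 1 + \<bar>v\<bar>)" using i1 by simp
        show "AE x in M0. norm (\<bar>x\<bar> powr d) \<le> norm (1 + \<bar>x\<bar>)"
        proof (intro AE_I2)
          fix x :: real
          have "\<bar>x\<bar> powr d \<le> 1 + \<bar>x\<bar>"
          proof (cases "\<bar>x\<bar> \<le> 1")
            case True then have "\<bar>x\<bar> powr d \<le> 1" using d by (intro powr_le1) auto
            then show ?thesis by simp
          next
            case False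
            then have "\<bar>x\<bar> powr d \<le> \<bar>x\<bar> powr 1" using d 2 by (intro powr_mono) auto
            also have "\<dots> = \<bar>x\<bar>" using False by simp
            finally show ?thesis by simp
          qed
          then show "norm (\<bar>x\<bar> powr d) \<le> norm (1 + \<bar>x\<bar>)" by simp
        qed
      qed
    next
      assume "\<exists>c. 0 < c \<and> ((\<lambda>x. x * (1 - cdf M0 x)) \<longlongrightarrow> c) at_top
                 \<and> ((\<lambda>x. \<bar>x\<bar> * cdf M0 x) \<longlongrightarrow> c) at_bot"
      then obtain c where c1: "((\<lambda>x. x * (1 - cdf M0 x)) \<longlongrightarrow> c) at_top"
        and c2: "((\<lambda>x. \<bar>x\<bar> * cdf M0 x) \<longlongrightarrow> c) at_bot" by auto
      have L1: "((\<lambda>x. x powr g * (1 - cdf M0 x)) \<longlongrightarrow> c) at_top"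
      proof (rule Lim_transform_eventually[OF c1])
        show "\<forall>\<^sub>F x in at_top. x * (1 - cdf M0 x) = x powr g * (1 - cdf M0 x)"
          using eventually_gt_at_top[of 0] by eventually_elim (simp add: 2)
      qed
      have L2: "((\<lambda>x. \<bar>x\<bar> powr g * cdf M0 x) \<longlongrightarrow> c) at_bot"
      proof (rule Lim_transform_eventually[OF c2])
        show "\<forall>\<^sub>F x in at_bot. \<bar>x\<bar> * cdf M0 x = \<bar>x\<bar> powr g * cdf M0 x"
          using eventually_le_at_bot[of "-1"] by eventually_elim (simp add: 2)
      qed
      show ?thesis using moment_from_limits[OF M0 d L1 L2] .
    qed
  next
    case 3
    then obtain cp cm where "((\<lambda>x. x powr g * (1 - cdf M0 x)) \<longlongrightarrow> cp) at_top"
                "((\<lambda>x. \<bar>x\<bar> powr g * cdf M0 x) \<longlongrightarrow> cm) at_bot"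
      using H unfolding H_gamma_def by blast
    then show ?thesis using moment_from_limits[OF M0 d] by blast
  qed
qed

lemma init_bound:
  assumes M0: "real_distribution M0" and H: "H_gamma M0 g" and d: "0 < d" "d < g" and g2: "g \<le> 2"
  shows "\<exists>C\<ge>0. \<forall>\<xi>. cmod (1 - char M0 \<xi>) \<le> C * \<bar>\<xi>\<bar> powr d"
proof -
  interpret real_distribution M0 by (rule M0)
  have int: "integrable M0 (\<lambda>y. \<bar>y\<bar> powr d)" by (rule moment_H[OF M0 H d g2])
  define C where "C = 2 * (\<integral>x. \<bar>x\<bar> powr d \<partial>M0)"
  have C0: "0 \<le> C" unfolding C_def by (simp add: integral_nonneg_AE)
  show ?thesis
  proof (cases "d \<le> 1")
    case True
    then show ?thesis using char_bound_small[OF M0 d(1) True int] C0 unfolding C_def by blast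
  next
    case False
    then have g1: "1 < g" using d by simp
    then have "g = 2 \<or> g \<in> {1<..<2}" using g2 by auto
    then have m: "integrable M0 (\<lambda>v. v) \<and> (\<integral>v. v \<partial>M0) = 0"
      using H g1 unfolding H_gamma_def by auto
    have "d \<le> 2" using d g2 by simp
    then show ?thesis using char_bound_large[OF M0 _ _ int] m False C0 unfolding C_def
      by (metis not_le)
  qed
qed



lemma integral_bound:
  fixes A :: "nat \<Rightarrow> 'a \<Rightarrow> real" and \<psi> :: "real \<Rightarrow> complex"
  assumes P: "prob_space M" and Am: "\<forall>i<N. A i \<in> borel_measurable M"
    and An: "\<forall>i<N. \<forall>\<omega>\<in>space M. A i \<omega> \<ge> 0"
    and \<psi>m: "\<psi> \<in> borel_measurable borel" and \<psi>1: "\<forall>\<eta>. cmod (\<psi> \<eta>) \<le> 1"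
    and \<psi>b: "\<forall>\<eta>. cmod (1 - \<psi> \<eta>) \<le> a * \<bar>\<eta>\<bar> powr d + b" and a: "0 \<le> a" and b: "0 \<le> b"
    and I: "(\<integral>\<^sup>+\<omega>. (\<Sum>j<N. ennreal (A j \<omega> powr d)) \<partial>M) = ennreal Q1" and Q1: "0 \<le> Q1"
  shows "cmod (1 - (\<integral>\<omega>. (\<Prod>i<N. \<psi> (A i \<omega> * \<xi>)) \<partial>M)) \<le> a * Q1 * \<bar>\<xi>\<bar> powr d + real N * b"
proof -
  interpret prob_space M by (rule P)
  define f where "f \<omega> = (\<Prod>i<N. \<psi> (A i \<omega> * \<xi>))" for \<omega>
  have fm: "f \<in> borel_measurable M" unfolding f_def
  proof (rule borel_measurable_prod)
    fix i assume "i \<in> {..<N}"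
    then have "A i \<in> borel_measurable M" using Am by simp
    then have "(\<lambda>\<omega>. A i \<omega> * \<xi>) \<in> borel_measurable M" by measurable
    then show "(\<lambda>\<omega>. \<psi> (A i \<omega> * \<xi>)) \<in> borel_measurable M"
      using measurable_compose[OF _ \<psi>m] by blast
  qed
  have f1: "cmod (f \<omega>) \<le> 1" for \<omega>
    unfolding f_def prod_norm[symmetric] using \<psi>1 by (intro prod_le_1) auto
  have fint: "integrable M f" using fm f1 by (intro integrable_const_bound[of _ 1]) auto
  have "1 - integral\<^sup>L M f = integral\<^sup>L M (\<lambda>\<omega>. 1 - f \<omega>)"
    using fint by (simp add: prob_space)
  then have "ennreal (cmod (1 - integral\<^sup>L M f)) = ennreal (cmod (integral\<^sup>L M (\<lambda>\<omega>. 1 - f \<omega>)))"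
    by simp
  also have "\<dots> \<le> (\<integral>\<^sup>+\<omega>. ennreal (cmod (1 - f \<omega>)) \<partial>M)"
    by (rule integral_norm_bound_ennreal) (use fint in simp)
  also have "\<dots> \<le> (\<integral>\<^sup>+\<omega>. ennreal (a * \<bar>\<xi>\<bar> powr d) * (\<Sum>j<N. ennreal (A j \<omega> powr d)) + ennreal (real N * b) \<partial>M)"
  proof (rule nn_integral_mono)
    fix \<omega> assume \<omega>: "\<omega> \<in> space M"
    have "cmod (1 - f \<omega>) \<le> (\<Sum>i<N. cmod (1 - \<psi> (A i \<omega> * \<xi>)))"
      unfolding f_def using \<psi>1 by (intro prod_diff_bound) auto
    also have "\<dots> \<le> (\<Sum>i<N. a * \<bar>\<xi>\<bar> powr d * A i \<omega> powr d + b)"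
    proof (rule sum_mono)
      fix i assume "i \<in> {..<N}"
      then have "0 \<le> A i \<omega>" using An \<omega> by auto
      then have "\<bar>A i \<omega> * \<xi>\<bar> powr d = A i \<omega> powr d * \<bar>\<xi>\<bar> powr d"
        by (simp add: abs_mult powr_mult)
      then show "cmod (1 - \<psi> (A i \<omega> * \<xi>)) \<le> a * \<bar>\<xi>\<bar> powr d * A i \<omega> powr d + b"
        using \<psi>b[rule_format, of "A i \<omega> * \<xi>"] by (simp add: mult_ac)
    qed
    also have "\<dots> = a * \<bar>\<xi>\<bar> powr d * (\<Sum>i<N. A i \<omega> powr d) + real N * b"
      by (simp add: sum.distrib sum_distrib_left)
    finally have le: "cmod (1 - f \<omega>) \<le> a * \<bar>\<xi>\<bar> powr d * (\<Sum>i<N. A i \<omega> powr d) + real N * b" .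
    have "ennreal (a * \<bar>\<xi>\<bar> powr d * (\<Sum>i<N. A i \<omega> powr d) + real N * b)
        = ennreal (a * \<bar>\<xi>\<bar> powr d) * (\<Sum>j<N. ennreal (A j \<omega> powr d)) + ennreal (real N * b)"
      using a b by (simp add: ennreal_plus ennreal_mult sum_ennreal sum_nonneg)
    with le show "ennreal (cmod (1 - f \<omega>)) \<le> ennreal (a * \<bar>\<xi>\<bar> powr d) * (\<Sum>j<N. ennreal (A j \<omega> powr d)) + ennreal (real N * b)"
      by (metis ennreal_leI)
  qed
  also have "\<dots> = ennreal (a * \<bar>\<xi>\<bar> powr d) * (\<integral>\<^sup>+\<omega>. (\<Sum>j<N. ennreal (A j \<omega> powr d)) \<partial>M) + ennreal (real N * b)"
  proof -
    have sm: "(\<lambda>\<omega>. \<Sum>j<N. ennreal (A j \<omega> powr d)) \<in> borel_measurable M"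
      using Am by (intro borel_measurable_sum) auto
    show ?thesis
      using sm by (subst nn_integral_add) (auto simp: nn_integral_cmult emeasure_space_1)
  qed
  also have "\<dots> = ennreal (a * Q1 * \<bar>\<xi>\<bar> powr d + real N * b)"
    using a b Q1 unfolding I by (simp add: ennreal_mult[symmetric] ennreal_plus mult_ac)
  finally show ?thesis using a b Q1 unfolding f_def
    by (subst (asm) ennreal_le_iff) auto
qed



lemma picard_step:
  fixes A :: "nat \<Rightarrow> 'a \<Rightarrow> real" and phi :: "real \<Rightarrow> real \<Rightarrow> complex"
  assumes P: "prob_space M" and Am: "\<forall>i<N. A i \<in> borel_measurable M"
    and An: "\<forall>i<N. \<forall>\<omega>\<in>space M. A i \<omega> \<ge> 0"
    and ch: "\<forall>t\<ge>0. \<exists>F. real_distribution F \<and> phi t = char F"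
    and cont: "\<forall>\<xi>. continuous_on {0..} (\<lambda>t. phi t \<xi>)"
    and der: "\<forall>t>0. \<forall>\<xi>. ((\<lambda>s. phi s \<xi>) has_vector_derivative
          (- phi t \<xi> + (\<integral>\<omega>. (\<Prod>i<N. phi t (A i \<omega> * \<xi>)) \<partial>M))) (at t)"
    and init: "\<forall>\<xi>. cmod (1 - phi 0 \<xi>) \<le> C * \<bar>\<xi>\<bar> powr d"
    and C: "0 \<le> C"
    and I: "(\<integral>\<^sup>+\<omega>. (\<Sum>j<N. ennreal (A j \<omega> powr d)) \<partial>M) = ennreal (q + 1)" and q: "0 \<le> q + 1"
    and IH: "\<forall>s\<ge>0. \<forall>\<eta>. cmod (1 - phi s \<eta>) \<le> C * exp (q * s) * \<bar>\<eta>\<bar> powr d + 2 * (real N * s) ^ n / fact n"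
  shows "\<forall>t\<ge>0. \<forall>\<xi>. cmod (1 - phi t \<xi>) \<le> C * exp (q * t) * \<bar>\<xi>\<bar> powr d + 2 * (real N * t) ^ Suc n / fact (Suc n)"
proof (intro allI impI)
  fix t \<xi> :: real assume t0: "0 \<le> t"
  show "cmod (1 - phi t \<xi>) \<le> C * exp (q * t) * \<bar>\<xi>\<bar> powr d + 2 * (real N * t) ^ Suc n / fact (Suc n)"
  proof (cases "t = 0")
    case True
    have "cmod (1 - phi 0 \<xi>) \<le> C * \<bar>\<xi>\<bar> powr d" using init by blast
    then show ?thesis using True by simp
  next
    case False
    then have t: "0 < t" using t0 by simp
    have ph1: "cmod (phi s \<eta>) \<le> 1" if "0 \<le> s" for s \<eta>
    proof -
      have "\<exists>F. real_distribution F \<and> phi s = char F" using ch that by auto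
      then obtain F where F: "real_distribution F" "phi s = char F" by blast
      show ?thesis unfolding F(2) by (rule real_distribution.cmod_char_le_1[OF F(1)])
    qed
    have phm: "phi s \<in> borel_measurable borel" if "0 \<le> s" for s
    proof -
      have "\<exists>F. real_distribution F \<and> phi s = char F" using ch that by auto
      then obtain F where F: "real_distribution F" "phi s = char F" by blast
      show ?thesis unfolding F(2) by (rule real_distribution.char_measurable[OF F(1)])
    qed
    define J where "J s = (\<integral>\<omega>. (\<Prod>i<N. phi s (A i \<omega> * \<xi>)) \<partial>M)" for s
    define z where "z s = exp s *\<^sub>R (1 - phi s \<xi>)" for s
    define z' where "z' s = exp s *\<^sub>R (1 - J s)" for s
    define B where "B s = C * exp ((q + 1) * s) * \<bar>\<xi>\<bar> powr d + 2 * exp t * (real N * s) ^ Suc n / fact (Suc n)" for s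
    define B' where "B' s = C * (q + 1) * exp ((q + 1) * s) * \<bar>\<xi>\<bar> powr d + 2 * exp t * real N * (real N * s) ^ n / fact n" for s
    have zd: "(z has_vector_derivative z' s) (at s)" if "0 < s" "s < t" for s
    proof -
      have d1: "((\<lambda>s. 1 - phi s \<xi>) has_vector_derivative (0 - (- phi s \<xi> + J s))) (at s)"
        unfolding J_def using der that by (intro has_vector_derivative_diff has_vector_derivative_const) auto
      have "(z has_vector_derivative (exp s *\<^sub>R (0 - (- phi s \<xi> + J s)) + exp s *\<^sub>R (1 - phi s \<xi>))) (at s)"
        unfolding z_def by (intro has_vector_derivative_scaleR d1 DERIV_exp)
      moreover have "exp s *\<^sub>R (0 - (- phi s \<xi> + J s)) + exp s *\<^sub>R (1 - phi s \<xi>) = z' s"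
        unfolding z'_def by (simp add: algebra_simps)
      ultimately show ?thesis by simp
    qed
    have Bd: "(B has_real_derivative B' s) (at s)" for s
    proof -
      have d1: "((\<lambda>s. exp ((q + 1) * s)) has_real_derivative exp ((q + 1) * s) * (q + 1)) (at s)"
        by (auto intro!: derivative_eq_intros)
      have d2: "((\<lambda>s. (real N * s) ^ Suc n) has_real_derivative real (Suc n) * (real N * s) ^ n * real N) (at s)"
        using DERIV_power[OF DERIV_cmult_Id[of "real N" s], of "Suc n"] by (simp add: mult_ac)
      have d3: "((\<lambda>s. (C * \<bar>\<xi>\<bar> powr d) * exp ((q + 1) * s) + (2 * exp t / fact (Suc n)) * (real N * s) ^ Suc n)
             has_real_derivative (C * \<bar>\<xi>\<bar> powr d) * (exp ((q + 1) * s) * (q + 1)) + (2 * exp t / fact (Suc n)) * (real (Suc n) * (real N * s) ^ n * real N)) (at s)"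
        by (intro DERIV_add DERIV_cmult d1 d2)
      have "B = (\<lambda>s. (C * \<bar>\<xi>\<bar> powr d) * exp ((q + 1) * s) + (2 * exp t / fact (Suc n)) * (real N * s) ^ Suc n)"
        unfolding B_def by (intro ext) (simp add: mult_ac)
      with d3 have "(B has_real_derivative (C * (exp ((q + 1) * s) * (q + 1)) * \<bar>\<xi>\<bar> powr d +
              2 * exp t * (real (Suc n) * (real N * s) ^ n * real N) / fact (Suc n))) (at s)"
        by (simp add: mult_ac)
      moreover have "C * (exp ((q + 1) * s) * (q + 1)) * \<bar>\<xi>\<bar> powr d +
              2 * exp t * (real (Suc n) * (real N * s) ^ n * real N) / fact (Suc n) = B' s"
      proof -
        have k: "real (Suc n) > 0" by simp
        have "2 * exp t * (real (Suc n) * (real N * s) ^ n * real N) / fact (Suc n)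
            = real (Suc n) * (2 * exp t * real N * (real N * s) ^ n) / (real (Suc n) * fact n)"
          by (simp only: fact_Suc of_nat_mult) (simp add: mult_ac)
        also have "\<dots> = 2 * exp t * real N * (real N * s) ^ n / fact n"
          using k by (subst mult_divide_mult_cancel_left) auto
        finally show ?thesis unfolding B'_def by (simp add: mult_ac)
      qed
      ultimately show ?thesis by simp
    qed
    have le: "cmod (z' s) \<le> B' s" if "0 < s" "s < t" for s
    proof -
      have "cmod (1 - J s) \<le> C * exp (q * s) * (q + 1) * \<bar>\<xi>\<bar> powr d + real N * (2 * (real N * s) ^ n / fact n)"
        unfolding J_def
      proof (rule integral_bound[OF P Am An phm _ _ _ _ I q])
        show "0 \<le> s" using that by simp
        show "\<forall>\<eta>. cmod (phi s \<eta>) \<le> 1" using ph1 that by simp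
        show "\<forall>\<eta>. cmod (1 - phi s \<eta>) \<le> C * exp (q * s) * \<bar>\<eta>\<bar> powr d + 2 * (real N * s) ^ n / fact n"
          using IH that by simp
        show "0 \<le> C * exp (q * s)" using C by simp
        show "0 \<le> 2 * (real N * s) ^ n / fact n" using that by simp
      qed
      then have "exp s * cmod (1 - J s) \<le> exp s * (C * exp (q * s) * (q + 1) * \<bar>\<xi>\<bar> powr d + real N * (2 * (real N * s) ^ n / fact n))"
        by simp
      also have "\<dots> = C * (q + 1) * exp ((q + 1) * s) * \<bar>\<xi>\<bar> powr d + exp s * (2 * real N * (real N * s) ^ n / fact n)"
      proof -
        show ?thesis by (simp add: algebra_simps exp_add)
      qed
      also have "\<dots> \<le> C * (q + 1) * exp ((q + 1) * s) * \<bar>\<xi>\<bar> powr d + exp t * (2 * real N * (real N * s) ^ n / fact n)"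
        using that by (intro add_left_mono mult_right_mono) auto
      also have "\<dots> = B' s" unfolding B'_def by simp
      finally show ?thesis unfolding z'_def by simp
    qed
    have zc: "continuous_on {0..t} z"
    proof -
      have pc: "continuous_on {0..t} (\<lambda>s. phi s \<xi>)"
        using cont by (rule_tac continuous_on_subset[where s="{0..}"]) auto
      show ?thesis unfolding z_def
        by (intro continuous_on_scaleR continuous_on_diff continuous_on_const continuous_on_exp continuous_on_id pc)
    qed
    have Bc: "continuous_on {0..t} B" unfolding B_def by (intro continuous_intros) auto
    have cmp: "cmod (z t - z 0) \<le> B t - B 0"
      by (rule compare_deriv[OF t zc Bc zd Bd le])
    have "exp t * cmod (1 - phi t \<xi>) = cmod (z t)" unfolding z_def by simp
    also have "\<dots> \<le> cmod (z 0) + cmod (z t - z 0)" using norm_triangle_ineq[of "z 0" "z t - z 0"] by simp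
    also have "\<dots> \<le> C * \<bar>\<xi>\<bar> powr d + (B t - B 0)" using init cmp unfolding z_def by (intro add_mono) auto
    also have "\<dots> = B t" unfolding B_def by simp
    also have "\<dots> = exp t * (C * exp (q * t) * \<bar>\<xi>\<bar> powr d + 2 * (real N * t) ^ Suc n / fact (Suc n))"
    proof -
      show ?thesis unfolding B_def by (simp add: algebra_simps exp_add)
    qed
    finally show ?thesis by simp
  qed
qed



lemma exp_neg_lim: "(k::real) > 0 \<Longrightarrow> ((\<lambda>t. exp (-(k*t))) \<longlongrightarrow> 0) at_top"
  by (rule filterlim_compose[OF exp_at_bot]) (auto intro!: filterlim_tendsto_pos_mult_at_top filterlim_ident simp: filterlim_uminus_at_bot)

lemma fact_pow_lim: "(\<lambda>n. 2 * x ^ n / fact n :: real) \<longlonglongrightarrow> 0"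
proof -
  have "(\<lambda>n. inverse (fact n) * x ^ n :: real) \<longlonglongrightarrow> 0"
    by (rule summable_LIMSEQ_zero[OF summable_exp])
  then have "(\<lambda>n. 2 * (inverse (fact n) * x ^ n) :: real) \<longlonglongrightarrow> 2 * 0"
    by (intro tendsto_mult tendsto_const)
  then show ?thesis by (simp add: divide_inverse mult_ac)
qed

lemma mu_finite:
  fixes M :: "'a measure"
  assumes s: "0 < s" and lt: "mufun M N A s < \<infinity>"
  shows "\<exists>q. (\<integral>\<^sup>+\<omega>. (\<Sum>j<N. ennreal (A j \<omega> powr s)) \<partial>M) = ennreal (q + 1) \<and> 0 \<le> q + 1
             \<and> mufun M N A s = ereal (q / s)"
proof -
  define I where "I = (\<integral>\<^sup>+\<omega>. (\<Sum>j<N. ennreal (A j \<omega> powr s)) \<partial>M)"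
  have mu: "mufun M N A s = (enn2ereal I - 1) / ereal s"
    unfolding mufun_def Qfun_def I_def by simp
  have "I \<noteq> \<top>"
  proof
    assume "I = \<top>"
    then have "mufun M N A s = \<infinity>" unfolding mu using s by simp
    then show False using lt by simp
  qed
  then have Ir: "I = ennreal (enn2real I)" by (simp add: ennreal_enn2real less_top)
  define q where "q = enn2real I - 1"
  have q1: "0 \<le> q + 1" unfolding q_def by simp
  have "I = ennreal (q + 1)" unfolding q_def using Ir by simp
  moreover have "mufun M N A s = ereal (q / s)"
  proof -
    have e1: "ereal (q + 1) - 1 = ereal q" by (simp add: one_ereal_def)
    show ?thesis
      unfolding mu using \<open>I = ennreal (q + 1)\<close> q1 s by (simp add: enn2ereal_ennreal e1 ereal_divide)
  qed
  ultimately show ?thesis using q1 unfolding I_def by blast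
qed

theorem theorem2:
  fixes M :: "'a measure" and N :: nat and A :: "nat \<Rightarrow> 'a \<Rightarrow> real"
    and M0 :: "real measure" and phi :: "real \<Rightarrow> real \<Rightarrow> complex"
    and \<gamma> \<delta> :: real
  assumes "prob_space M"
    and "N \<ge> 2"
    and "\<forall>i<N. A i \<in> borel_measurable M"
    and "\<forall>i<N. \<forall>\<omega>\<in>space M. A i \<omega> \<ge> 0"
    and "prob_space.prob M {\<omega>\<in>space M. (\<Sum>i<N. if A i \<omega> > 0 then 1 else 0 :: nat) \<in> {0, 1}} < 1"
    and "prob_space.expectation M (\<lambda>\<omega>. (\<Sum>i<N. if A i \<omega> > 0 then 1 else 0 :: real)) > 1"
    and "prob_space.prob M {\<omega>\<in>space M. \<forall>i<N. A i \<omega> \<in> {0, 1}} < 1"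
    and "real_distribution M0"
    and "cauchy_solution M N A (char M0) phi"
    and "0 < \<gamma>" and "\<gamma> \<le> 2"
    and "H_gamma M0 \<gamma>"
    and "0 < \<delta>" and "\<delta> < \<gamma>"
    and "mufun M N A \<delta> < mufun M N A \<gamma>" and "mufun M N A \<gamma> < \<infinity>"
  shows "\<forall>\<xi>::real. ((\<lambda>t. phi t (exp (- t * real_of_ereal (mufun M N A \<gamma>)) * \<xi>)) \<longlongrightarrow> 1) at_top"
proof -
  note P = assms(1) and Am = assms(3) and An = assms(4) and M0 = assms(8)
  note CS = assms(9)[unfolded cauchy_solution_def]
  have ch: "\<forall>t\<ge>0. \<exists>F. real_distribution F \<and> phi t = char F" using CS by blast
  have cont: "\<forall>\<xi>. continuous_on {0..} (\<lambda>t. phi t \<xi>)" using CS by blast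
  have der: "\<forall>t>0. \<forall>\<xi>. ((\<lambda>s. phi s \<xi>) has_vector_derivative
          (- phi t \<xi> + (\<integral>\<omega>. (\<Prod>i<N. phi t (A i \<omega> * \<xi>)) \<partial>M))) (at t)" using CS by blast
  have phi0: "phi 0 = char M0" using CS by blast
  have mug: "mufun M N A \<gamma> < \<infinity>" by (rule assms(16))
  have mud: "mufun M N A \<delta> < \<infinity>" using assms(15,16) by (rule less_trans)
  obtain q where Iq: "(\<integral>\<^sup>+\<omega>. (\<Sum>j<N. ennreal (A j \<omega> powr \<delta>)) \<partial>M) = ennreal (q + 1)"
    and q1: "0 \<le> q + 1" and mdq: "mufun M N A \<delta> = ereal (q / \<delta>)"
    using mu_finite[OF assms(13) mud] by blast
  obtain qg where mgq: "mufun M N A \<gamma> = ereal (qg / \<gamma>)"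
    using mu_finite[OF assms(10) mug] by blast
  define m where "m = qg / \<gamma>"
  have rm: "real_of_ereal (mufun M N A \<gamma>) = m" unfolding m_def mgq by simp
  have qm: "q / \<delta> < m" using assms(15) unfolding mdq mgq m_def by simp
  then have qm': "q < m * \<delta>" using assms(13) by (simp add: field_simps)
  obtain C where C: "0 \<le> C" and initC: "\<forall>\<xi>. cmod (1 - char M0 \<xi>) \<le> C * \<bar>\<xi>\<bar> powr \<delta>"
    using init_bound[OF M0 assms(12) assms(13) assms(14) assms(11)] by blast
  have init: "\<forall>\<xi>. cmod (1 - phi 0 \<xi>) \<le> C * \<bar>\<xi>\<bar> powr \<delta>" using initC phi0 by simp
  have ph1: "cmod (phi s \<eta>) \<le> 1" if "0 \<le> s" for s \<eta>
  proof -
    have "\<exists>F. real_distribution F \<and> phi s = char F" using ch that by auto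
    then obtain F where F: "real_distribution F" "phi s = char F" by blast
    show ?thesis unfolding F(2) by (rule real_distribution.cmod_char_le_1[OF F(1)])
  qed
  have Bn: "\<forall>s\<ge>0. \<forall>\<eta>. cmod (1 - phi s \<eta>) \<le> C * exp (q * s) * \<bar>\<eta>\<bar> powr \<delta> + 2 * (real N * s) ^ n / fact n" for n
  proof (induction n)
    case 0
    show ?case
    proof (intro allI impI)
      fix s \<eta> :: real assume s: "0 \<le> s"
      have "cmod (1 - phi s \<eta>) \<le> cmod 1 + cmod (phi s \<eta>)" by (rule norm_triangle_ineq4)
      also have "\<dots> \<le> 2" using ph1[OF s, of \<eta>] by simp
      also have "\<dots> \<le> C * exp (q * s) * \<bar>\<eta>\<bar> powr \<delta> + 2" using C by simp
      finally show "cmod (1 - phi s \<eta>) \<le> C * exp (q * s) * \<bar>\<eta>\<bar> powr \<delta> + 2 * (real N * s) ^ 0 / fact 0"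
        by simp
    qed
  next
    case (Suc n)
    show ?case by (rule picard_step[OF P Am An ch cont der init C Iq q1 Suc])
  qed
  have bound: "cmod (1 - phi s \<eta>) \<le> C * exp (q * s) * \<bar>\<eta>\<bar> powr \<delta>" if s: "0 \<le> s" for s \<eta>
  proof -
    have lim0: "(\<lambda>n. C * exp (q * s) * \<bar>\<eta>\<bar> powr \<delta> + 2 * (real N * s) ^ n / fact n)
        \<longlonglongrightarrow> C * exp (q * s) * \<bar>\<eta>\<bar> powr \<delta> + 0"
      by (intro tendsto_add tendsto_const) (simp add: fact_pow_lim[of "real N * s", simplified mult.assoc] )
    have lim: "(\<lambda>n. C * exp (q * s) * \<bar>\<eta>\<bar> powr \<delta> + 2 * (real N * s) ^ n / fact n)
        \<longlonglongrightarrow> C * exp (q * s) * \<bar>\<eta>\<bar> powr \<delta>" using lim0 by simp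
    show ?thesis
      by (rule LIMSEQ_le_const[OF lim]) (use Bn s in auto)
  qed
  show ?thesis
  proof
    fix \<xi> :: real
    define k where "k = m * \<delta> - q"
    have k: "0 < k" unfolding k_def using qm' by simp
    have ev: "\<forall>\<^sub>F t in at_top. norm (phi t (exp (- t * m) * \<xi>) - 1) \<le> C * \<bar>\<xi>\<bar> powr \<delta> * exp (-(k * t))"
      using eventually_ge_at_top[of 0]
    proof eventually_elim
      case (elim t)
      have "norm (phi t (exp (- t * m) * \<xi>) - 1) = cmod (1 - phi t (exp (- t * m) * \<xi>))"
        by (simp add: norm_minus_commute)
      also have "\<dots> \<le> C * exp (q * t) * \<bar>exp (- t * m) * \<xi>\<bar> powr \<delta>" by (rule bound[OF elim])
      also have "\<bar>exp (- t * m) * \<xi>\<bar> powr \<delta> = exp (- t * m * \<delta>) * \<bar>\<xi>\<bar> powr \<delta>"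
        by (simp add: abs_mult powr_mult exp_powr_real)
      also have "C * exp (q * t) * (exp (- t * m * \<delta>) * \<bar>\<xi>\<bar> powr \<delta>) = C * \<bar>\<xi>\<bar> powr \<delta> * exp (-(k * t))"
        unfolding k_def by (simp add: mult_ac exp_add[symmetric] algebra_simps)
      finally show ?case .
    qed
    have "((\<lambda>t. C * \<bar>\<xi>\<bar> powr \<delta> * exp (-(k * t))) \<longlongrightarrow> C * \<bar>\<xi>\<bar> powr \<delta> * 0) at_top"
      by (intro tendsto_mult tendsto_const exp_neg_lim k)
    then have "((\<lambda>t. phi t (exp (- t * m) * \<xi>) - 1) \<longlongrightarrow> 0) at_top"
      using Lim_null_comparison[OF ev] by simp
    then have "((\<lambda>t. (phi t (exp (- t * m) * \<xi>) - 1) + 1) \<longlongrightarrow> 0 + 1) at_top"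
      by (intro tendsto_add tendsto_const)
    then show "((\<lambda>t. phi t (exp (- t * real_of_ereal (mufun M N A \<gamma>)) * \<xi>)) \<longlongrightarrow> 1) at_top"
      unfolding rm by simp
  qed
qed


end
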